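(* Let $L$ be an ideal lattice. Then $(\operatorname{Spec}L,D)$ is a spectrum of $L$, where $D(a)=\{p\in\operatorname{Spec}L\mid a\not\leq p\}$. For every spectrum $(X,\delta)$ of $L$ there exists a unique continuous map $f\colon X\to\operatorname{Spec}L$ such that $\delta(a)=f^{-1}(D(a))$ for all $a\in L$; it is given by $f(x)=\bigvee\{c\in L\mid c\text{ compact},\ x\notin\delta(c)\}$.
   Context: An ideal lattice is a poset $(L,\leq)$ with an associative multiplication such that: (L1) $L$ is a complete lattice; (L2) every element is a supremum of compact elements ($a$ is compact if $a\leq\sup A$ implies $a\leq\sup A'$ for some finite $A'\subseteq A$); (L3) multiplication distributes over binary joins on both sides; (L4) $1=\sup L$ is compact and is a two-sided identity; (L5) products of compact elements are compact. Prime: $p\neq1$ with $ab\leq p\Rightarrow a\leq p$ or $b\leq p$. $\operatorname{Spec}L$: set of primes with the Zariski topology whose closed sets are $V(a)=\{p\mid a\leq p\}$. A spectrum of $L$ is a pair $(X,\delta)$ with $X$ a topological space and $\delta$ assigning to each $a\in L$ an open subset $\delta(a)\subseteq X$ such that $\delta(\bigvee_{a\in A}a)=\bigcup_{a\in A}\delta(a)$ for all $A\subseteq L$, $\delta(1)=X$, and $\delta(ab)=\delta(a)\cap\delta(b)$ for all $a,b\in L$. *)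

theory Defs
  imports "HOL-Analysis.Abstract_Topology"
begin

definition compact_el :: "'a::complete_lattice \<Rightarrow> bool" where
  "compact_el a \<longleftrightarrow>
     (\<forall>A. a \<le> Sup A \<longrightarrow> (\<exists>A'. finite A' \<and> A' \<subseteq> A \<and> a \<le> Sup A'))"

definition ideal_lattice :: "('a::complete_lattice \<Rightarrow> 'a \<Rightarrow> 'a) \<Rightarrow> bool" where
  "ideal_lattice m \<longleftrightarrow>
     (\<forall>a b c. m (m a b) c = m a (m b c)) \<and>
     (\<forall>a::'a. \<exists>C. (\<forall>c\<in>C. compact_el c) \<and> a = Sup C) \<and>
     (\<forall>a b c. m a (sup b c) = sup (m a b) (m a c)) \<and>
     (\<forall>a b c. m (sup b c) a = sup (m b a) (m c a)) \<and>
     compact_el (top::'a) \<and>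
     (\<forall>a. m top a = a \<and> m a top = a) \<and>
     (\<forall>a b. compact_el a \<and> compact_el b \<longrightarrow> compact_el (m a b))"

definition prime_el :: "('a::complete_lattice \<Rightarrow> 'a \<Rightarrow> 'a) \<Rightarrow> 'a \<Rightarrow> bool" where
  "prime_el m p \<longleftrightarrow> p \<noteq> top \<and> (\<forall>a b. m a b \<le> p \<longrightarrow> a \<le> p \<or> b \<le> p)"

definition Spec :: "('a::complete_lattice \<Rightarrow> 'a \<Rightarrow> 'a) \<Rightarrow> 'a set" where
  "Spec m = {p. prime_el m p}"

definition Dset :: "('a::complete_lattice \<Rightarrow> 'a \<Rightarrow> 'a) \<Rightarrow> 'a \<Rightarrow> 'a set" where
  "Dset m a = {p \<in> Spec m. \<not> a \<le> p}"

definition zariski :: "('a::complete_lattice \<Rightarrow> 'a \<Rightarrow> 'a) \<Rightarrow> 'a topology" where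
  "zariski m = topology (\<lambda>U. \<exists>a. U = Dset m a)"

definition is_spectrum ::
  "('a::complete_lattice \<Rightarrow> 'a \<Rightarrow> 'a) \<Rightarrow> 'b topology \<Rightarrow> ('a \<Rightarrow> 'b set) \<Rightarrow> bool" where
  "is_spectrum m X \<delta> \<longleftrightarrow>
     (\<forall>a. openin X (\<delta> a)) \<and>
     (\<forall>A. \<delta> (Sup A) = (\<Union>a\<in>A. \<delta> a)) \<and>
     \<delta> top = topspace X \<and>
     (\<forall>a b. \<delta> (m a b) = \<delta> a \<inter> \<delta> b)"

end

theory Submission
  imports Defs
begin

lemma il_distl: "ideal_lattice m \<Longrightarrow> m a (sup b c) = sup (m a b) (m a c)"
  unfolding ideal_lattice_def by (elim conjE) (drule spec, drule spec, drule spec, assumption)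
lemma il_distr: "ideal_lattice m \<Longrightarrow> m (sup b c) a = sup (m b a) (m c a)"
  unfolding ideal_lattice_def by (elim conjE) (drule spec, drule spec, drule spec, assumption)
lemma il_topl: "ideal_lattice m \<Longrightarrow> m top a = a"
  unfolding ideal_lattice_def by (elim conjE) (drule spec, erule conjunct1)
lemma il_topr: "ideal_lattice m \<Longrightarrow> m a top = a"
  unfolding ideal_lattice_def by (elim conjE) (drule spec, erule conjunct2)
lemma il_alg: assumes "ideal_lattice (m::'a \<Rightarrow> 'a \<Rightarrow> 'a)" shows "\<exists>C. (\<forall>c\<in>C. compact_el c) \<and> (a::'a::complete_lattice) = Sup C"
  using conjunct1[OF conjunct2[OF assms[unfolded ideal_lattice_def]]] by (rule spec)

lemma m_mono_r:
  assumes "ideal_lattice m" "b \<le> c" shows "m a b \<le> m a c"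
proof -
  have "m a c = m a (sup b c)" using assms(2) by (simp add: sup.absorb2)
  also have "\<dots> = sup (m a b) (m a c)" by (rule il_distl[OF assms(1)])
  finally show ?thesis by (metis sup.cobounded1)
qed

lemma m_mono_l:
  assumes "ideal_lattice m" "b \<le> c" shows "m b a \<le> m c a"
proof -
  have "m c a = m (sup b c) a" using assms(2) by (simp add: sup.absorb2)
  also have "\<dots> = sup (m b a) (m c a)" by (rule il_distr[OF assms(1)])
  finally show ?thesis by (metis sup.cobounded1)
qed

lemma m_le1:
  assumes "ideal_lattice m" shows "m a b \<le> a"
  using m_mono_r[OF assms top_greatest[of b], of a] il_topr[OF assms, of a] by simp

lemma m_le2:
  assumes "ideal_lattice m" shows "m a b \<le> b"
  using m_mono_l[OF assms top_greatest[of a], of b] il_topl[OF assms, of b] by simp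

lemma Dset_mult:
  assumes "ideal_lattice m" shows "Dset m (m a b) = Dset m a \<inter> Dset m b"
  using m_le1[OF assms, of a b] m_le2[OF assms, of a b]
  unfolding Dset_def Spec_def prime_el_def
  by (auto intro: order_trans)

lemma Dset_Sup: "Dset m (Sup A) = (\<Union>a\<in>A. Dset m a)"
  unfolding Dset_def by (auto simp: Sup_le_iff)

lemma Dset_top: "Dset m top = Spec m"
  unfolding Dset_def Spec_def prime_el_def by (auto simp: top_unique)

lemma istop_zar:
  assumes "ideal_lattice m" shows "istopology (\<lambda>U. \<exists>a. U = Dset m a)"
  unfolding istopology_def
proof (intro conjI allI impI)
  fix S T assume "\<exists>a. S = Dset m a" "\<exists>a. T = Dset m a"
  then obtain a b where ab: "S = Dset m a" "T = Dset m b" by blast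
  have "S \<inter> T = Dset m (m a b)" unfolding ab Dset_mult[OF assms] ..
  then show "\<exists>a. S \<inter> T = Dset m a" by (rule exI)
next
  fix K :: "'a set set" assume h: "\<forall>U\<in>K. \<exists>a. U = Dset m a"
  have "\<Union>K = (\<Union>a\<in>{a. Dset m a \<in> K}. Dset m a)"
  proof (rule equalityI)
    show "\<Union>K \<subseteq> (\<Union>a\<in>{a. Dset m a \<in> K}. Dset m a)"
    proof
      fix x assume "x \<in> \<Union>K"
      then obtain U where U: "U \<in> K" "x \<in> U" by (rule UnionE)
      then obtain a where a: "U = Dset m a" using h by blast
      have "a \<in> {a. Dset m a \<in> K}" using U(1) a by simp
      moreover have "x \<in> Dset m a" using U(2) a by simp
      ultimately show "x \<in> (\<Union>a\<in>{a. Dset m a \<in> K}. Dset m a)" by (rule UN_I)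
    qed
    show "(\<Union>a\<in>{a. Dset m a \<in> K}. Dset m a) \<subseteq> \<Union>K" by auto
  qed
  then have "\<Union>K = Dset m (Sup {a. Dset m a \<in> K})" by (simp only: Dset_Sup)
  then show "\<exists>a. \<Union>K = Dset m a" by (rule exI)
qed

lemma openin_zar:
  assumes "ideal_lattice m" shows "openin (zariski m) U \<longleftrightarrow> (\<exists>a. U = Dset m a)"
  unfolding zariski_def using topology_inverse'[OF istop_zar[OF assms]] by simp

lemma topspace_zar:
  assumes "ideal_lattice m" shows "topspace (zariski m) = Spec m"
proof -
  have "topspace (zariski m) = \<Union>{U. openin (zariski m) U}" by (simp add: topspace_def)
  also have "\<dots> = \<Union>{U. \<exists>a. U = Dset m a}" unfolding openin_zar[OF assms] ..
  also have "\<dots> = Spec m"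
  proof (rule equalityI)
    show "\<Union>{U. \<exists>a. U = Dset m a} \<subseteq> Spec m" unfolding Dset_def by blast
    have "Dset m top \<in> {U. \<exists>a. U = Dset m a}" by blast
    then show "Spec m \<subseteq> \<Union>{U. \<exists>a. U = Dset m a}" unfolding Dset_top by blast
  qed
  finally show ?thesis .
qed

lemma sp_open: assumes "is_spectrum m X \<delta>" shows "openin X (\<delta> a)"
  using conjunct1[OF assms[unfolded is_spectrum_def]] by (rule spec)
lemma sp_Sup: assumes "is_spectrum m X \<delta>" shows "\<delta> (Sup A) = (\<Union>a\<in>A. \<delta> a)"
  using conjunct1[OF conjunct2[OF assms[unfolded is_spectrum_def]]] by (rule spec)
lemma sp_top: assumes "is_spectrum m X \<delta>" shows "\<delta> top = topspace X"
  using conjunct1[OF conjunct2[OF conjunct2[OF assms[unfolded is_spectrum_def]]]] .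
lemma sp_mult: assumes "is_spectrum m X \<delta>" shows "\<delta> (m a b) = \<delta> a \<inter> \<delta> b"
  using conjunct2[OF conjunct2[OF conjunct2[OF assms[unfolded is_spectrum_def]]]] by blast

lemma delta_mono:
  assumes "is_spectrum m X \<delta>" "a \<le> b" shows "\<delta> a \<subseteq> \<delta> b"
proof -
  have "\<delta> (Sup {a, b}) = (\<Union>x\<in>{a,b}. \<delta> x)" by (rule sp_Sup[OF assms(1)])
  then have "\<delta> (sup a b) = \<delta> a \<union> \<delta> b" by simp
  moreover have "sup a b = b" using assms(2) by (simp add: sup.absorb2)
  ultimately show ?thesis by auto
qed

lemma key:
  assumes L: "ideal_lattice m" and S: "is_spectrum m X \<delta>"
  shows "a \<le> Sup {c. compact_el c \<and> x \<notin> \<delta> c} \<longleftrightarrow> x \<notin> \<delta> a"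
proof -
  obtain C where C: "\<forall>c\<in>C. compact_el c" "a = Sup C"
    using il_alg[OF L] by blast
  let ?S = "{c. compact_el c \<and> x \<notin> \<delta> c}"
  show ?thesis
  proof
    assume le: "a \<le> Sup ?S"
    show "x \<notin> \<delta> a"
    proof
      assume "x \<in> \<delta> a"
      then have "x \<in> (\<Union>c\<in>C. \<delta> c)" using sp_Sup[OF S, of C] C(2) by simp
      then obtain c where c: "c \<in> C" "x \<in> \<delta> c" by blast
      have "c \<le> a" using C(2) c(1) by (simp add: Sup_upper)
      then have "c \<le> Sup ?S" using le by simp
      then obtain S' where S': "finite S'" "S' \<subseteq> ?S" "c \<le> Sup S'"
        using C(1) c(1) unfolding compact_el_def by meson
      have "\<delta> (Sup S') = (\<Union>d\<in>S'. \<delta> d)" by (rule sp_Sup[OF S])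
      then have "x \<notin> \<delta> (Sup S')" using S'(2) by blast
      moreover have "\<delta> c \<subseteq> \<delta> (Sup S')" using delta_mono[OF S S'(3)] .
      ultimately show False using c(2) by blast
    qed
  next
    assume nx: "x \<notin> \<delta> a"
    have "\<forall>c\<in>C. c \<le> Sup ?S"
    proof
      fix c assume "c \<in> C"
      then have "c \<le> a" "compact_el c" using C by (auto simp: Sup_upper)
      then have "x \<notin> \<delta> c" using delta_mono[OF S] nx by blast
      then show "c \<le> Sup ?S" using \<open>compact_el c\<close> by (simp add: Sup_upper)
    qed
    then show "a \<le> Sup ?S" using C(2) by (simp add: Sup_le_iff)
  qed
qed

lemma spec_f:
  assumes L: "ideal_lattice m" and S: "is_spectrum m X \<delta>" and x: "x \<in> topspace X"
  shows "Sup {c. compact_el c \<and> x \<notin> \<delta> c} \<in> Spec m"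
  unfolding Spec_def prime_el_def
proof (intro CollectI conjI allI impI)
  let ?f = "Sup {c. compact_el c \<and> x \<notin> \<delta> c}"
  show "?f \<noteq> top"
  proof
    assume "?f = top"
    then have "x \<notin> \<delta> top" using key[OF L S, of top x] by simp
    then show False using sp_top[OF S] x by simp
  qed
next
  fix a b
  let ?f = "Sup {c. compact_el c \<and> x \<notin> \<delta> c}"
  assume "m a b \<le> ?f"
  then have "x \<notin> \<delta> (m a b)" using key[OF L S] by blast
  then have "x \<notin> \<delta> a \<or> x \<notin> \<delta> b" using sp_mult[OF S, of a b] by blast
  then show "a \<le> ?f \<or> b \<le> ?f" using key[OF L S] by blast
qed

lemma delta_sub:
  assumes "is_spectrum m X \<delta>" shows "\<delta> a \<subseteq> topspace X"
  using sp_open[OF assms] by (rule openin_subset)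

theorem mainTheorem7:
  fixes m :: "'a::complete_lattice \<Rightarrow> 'a \<Rightarrow> 'a"
  assumes "ideal_lattice m"
  shows "is_spectrum m (zariski m) (Dset m) \<and>
    (\<forall>(X::'b topology) \<delta>. is_spectrum m X \<delta> \<longrightarrow>
       (let f = (\<lambda>x. Sup {c. compact_el c \<and> x \<notin> \<delta> c}) in
          continuous_map X (zariski m) f \<and>
          (\<forall>a. \<delta> a = {x \<in> topspace X. f x \<in> Dset m a}) \<and>
          (\<forall>g. continuous_map X (zariski m) g \<and>
               (\<forall>a. \<delta> a = {x \<in> topspace X. g x \<in> Dset m a}) \<longrightarrow>
               (\<forall>x\<in>topspace X. g x = f x))))"
proof (intro conjI allI impI)
  note L = assms
  show "is_spectrum m (zariski m) (Dset m)"
    unfolding is_spectrum_def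
  proof (intro conjI allI)
    fix a show "openin (zariski m) (Dset m a)" using openin_zar[OF L] by blast
  next
    fix A show "Dset m (Sup A) = (\<Union>a\<in>A. Dset m a)" by (rule Dset_Sup)
  next
    show "Dset m top = topspace (zariski m)" using Dset_top topspace_zar[OF L] by simp
  next
    fix a b show "Dset m (m a b) = Dset m a \<inter> Dset m b" by (rule Dset_mult[OF L])
  qed
next
  note L = assms
  fix X :: "'b topology" and \<delta> assume S: "is_spectrum m X \<delta>"
  define f where "f = (\<lambda>x. Sup {c. compact_el c \<and> x \<notin> \<delta> c})"
  have pre: "\<delta> a = {x \<in> topspace X. f x \<in> Dset m a}" for a
  proof -
    have "x \<in> \<delta> a \<longleftrightarrow> \<not> a \<le> f x" for x using key[OF L S, of a x] unfolding f_def by blast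
    note k = this
    show ?thesis
    proof (rule set_eqI)
      fix x
      show "x \<in> \<delta> a \<longleftrightarrow> x \<in> {x \<in> topspace X. f x \<in> Dset m a}"
      proof
        assume h: "x \<in> \<delta> a"
        then have t: "x \<in> topspace X" using delta_sub[OF S, of a] by blast
        then have "f x \<in> Spec m" using spec_f[OF L S] unfolding f_def by blast
        then show "x \<in> {x \<in> topspace X. f x \<in> Dset m a}" using t h k unfolding Dset_def by blast
      next
        assume "x \<in> {x \<in> topspace X. f x \<in> Dset m a}"
        then show "x \<in> \<delta> a" using k unfolding Dset_def by blast
      qed
    qed
  qed
  have c1: "\<forall>x\<in>topspace X. f x \<in> topspace (zariski m)"
    using spec_f[OF L S] topspace_zar[OF L] unfolding f_def by simp
  have c2: "\<forall>U. openin (zariski m) U \<longrightarrow> openin X {x \<in> topspace X. f x \<in> U}"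
  proof (intro allI impI)
    fix U assume "openin (zariski m) U"
    then obtain a where "U = Dset m a" using openin_zar[OF L] by blast
    then have "{x \<in> topspace X. f x \<in> U} = \<delta> a" using pre by simp
    then show "openin X {x \<in> topspace X. f x \<in> U}" using sp_open[OF S, of a] by simp
  qed
  have cont: "continuous_map X (zariski m) f"
    unfolding continuous_map_def Pi_iff using c1 c2 by (rule conjI)
  have uniq: "\<forall>g. continuous_map X (zariski m) g \<and>
               (\<forall>a. \<delta> a = {x \<in> topspace X. g x \<in> Dset m a}) \<longrightarrow>
               (\<forall>x\<in>topspace X. g x = f x)"
  proof (intro allI impI ballI)
    fix g x assume g: "continuous_map X (zariski m) g \<and>
               (\<forall>a. \<delta> a = {x \<in> topspace X. g x \<in> Dset m a})" and x: "x \<in> topspace X"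
    have "g x \<in> topspace (zariski m)" using conjunct1[OF g] x unfolding continuous_map_def Pi_iff by blast
    then have gs: "g x \<in> Spec m" using topspace_zar[OF L] by simp
    have iff: "x \<notin> \<delta> c \<longleftrightarrow> c \<le> g x" for c
    proof -
      have "\<delta> c = {x \<in> topspace X. g x \<in> Dset m c}" using conjunct2[OF g] by (rule spec)
      then have "x \<in> \<delta> c \<longleftrightarrow> g x \<in> Dset m c" using x by simp
      also have "\<dots> \<longleftrightarrow> \<not> c \<le> g x" using gs unfolding Dset_def by blast
      finally show ?thesis by blast
    qed
    obtain C where C: "\<forall>c\<in>C. compact_el c" "g x = Sup C"
      using il_alg[OF L] by blast
    have "f x = Sup {c. compact_el c \<and> c \<le> g x}" unfolding f_def using iff by simp
    also have "\<dots> = g x"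
    proof (rule antisym)
      show "Sup {c. compact_el c \<and> c \<le> g x} \<le> g x" by (simp add: Sup_le_iff)
      show "g x \<le> Sup {c. compact_el c \<and> c \<le> g x}"
      proof -
        have "C \<subseteq> {c. compact_el c \<and> c \<le> g x}" using C by (auto simp: Sup_upper)
        then show ?thesis using C(2) Sup_subset_mono by metis
      qed
    qed
    finally show "g x = f x" by simp
  qed
  show "let f = (\<lambda>x. Sup {c. compact_el c \<and> x \<notin> \<delta> c}) in
          continuous_map X (zariski m) f \<and>
          (\<forall>a. \<delta> a = {x \<in> topspace X. f x \<in> Dset m a}) \<and>
          (\<forall>g. continuous_map X (zariski m) g \<and>
               (\<forall>a. \<delta> a = {x \<in> topspace X. g x \<in> Dset m a}) \<longrightarrow>
               (\<forall>x\<in>topspace X. g x = f x))"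
  proof -
    have "continuous_map X (zariski m) f \<and>
          (\<forall>a. \<delta> a = {x \<in> topspace X. f x \<in> Dset m a}) \<and>
          (\<forall>g. continuous_map X (zariski m) g \<and>
               (\<forall>a. \<delta> a = {x \<in> topspace X. g x \<in> Dset m a}) \<longrightarrow>
               (\<forall>x\<in>topspace X. g x = f x))"
      using conjI[OF cont conjI[OF allI[OF pre] uniq]] .
    then show ?thesis unfolding Let_def f_def .
  qed
qed

end
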